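(* Consider a deterministic two-player mean-payoff game on $\vec{\mathcal G}=([n],E)$, $m=|E|$. Fix $r\in\mathbb R^m$, and let $\tilde r\in\mathbb R^m$ and $\varepsilon>0$ satisfy $\|r-\tilde r\|_\infty\le\varepsilon$. Let $(\sigma,\tau)\in\Xi$ and let $E^{\sigma,\tau}\subseteq E$ be the set of edges used by $(\sigma,\tau)$. Define $r^{(1)},r^{(2)}\in\mathbb R^m$ by $r^{(1)}_{ij}=r^{(2)}_{ij}=\tilde r_{ij}$ if $(i,j)\in E^{\sigma,\tau}$, and $r^{(1)}_{ij}=\tilde r_{ij}-2n\varepsilon$, $r^{(2)}_{ij}=\tilde r_{ij}+2n\varepsilon$ otherwise. If $(\sigma,\tau)$ is a pair of optimal policies in the mean-payoff games with weights $r^{(1)}$ and with weights $r^{(2)}$, then $(\sigma,\tau)$ is a pair of optimal policies in the mean-payoff game with weights $r$.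
   Context: The game is played on a directed graph without multiple edges, each vertex having an outgoing edge, with $[n]=V_{\max}\uplus V_{\min}$ and weights $r\in\mathbb R^E$. Policies $\sigma:V_{\max}\to[n]$, $\tau:V_{\min}\to[n]$ with $(i,\sigma(i)),(i,\tau(i))\in E$; $E^{\sigma,\tau}=\{(i,\sigma(i)):i\in V_{\max}\}\cup\{(i,\tau(i)):i\in V_{\min}\}$. $\Xi$ is the set of pairs for which the subgraph with edge set $E^{\sigma,\tau}$ has exactly one directed cycle. Playing $(\sigma,\tau)$ from $i$, the token enters a cycle; $g_i(\sigma,\tau)$ is its mean weight (sum of weights / number of edges). The value is the unique $\lambda\in\mathbb R^n$ admitting $(\sigma^*,\tau^* )$ with $g_i(\sigma',\tau^* )\le\lambda_i\le g_i(\sigma^*,\tau')$ for all $i,\sigma',\tau'$; such $(\sigma^*,\tau^* )$ is called a pair of optimal policies. *)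

theory Defs
  imports Complex_Main
begin

text \<open>Vertices are [n] = {0..<n}; edges E :: (nat * nat) set; weights are
functions on edges (only their values on E matter).\<close>

definition game_graph :: "nat \<Rightarrow> (nat \<times> nat) set \<Rightarrow> nat set \<Rightarrow> nat set \<Rightarrow> bool" where
  "game_graph n E Vmax Vmin \<longleftrightarrow>
     E \<subseteq> {0..<n} \<times> {0..<n} \<and>
     (\<forall>i\<in>{0..<n}. \<exists>j. (i, j) \<in> E) \<and>
     Vmax \<union> Vmin = {0..<n} \<and> Vmax \<inter> Vmin = {}"

definition is_policy :: "(nat \<times> nat) set \<Rightarrow> nat set \<Rightarrow> (nat \<Rightarrow> nat) \<Rightarrow> bool" where
  "is_policy E V p \<longleftrightarrow> (\<forall>i\<in>V. (i, p i) \<in> E)"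

definition succ_of :: "nat set \<Rightarrow> (nat \<Rightarrow> nat) \<Rightarrow> (nat \<Rightarrow> nat) \<Rightarrow> nat \<Rightarrow> nat" where
  "succ_of Vmax \<sigma> \<tau> i = (if i \<in> Vmax then \<sigma> i else \<tau> i)"

definition policy_edges :: "nat set \<Rightarrow> nat set \<Rightarrow> (nat \<Rightarrow> nat) \<Rightarrow> (nat \<Rightarrow> nat) \<Rightarrow> (nat \<times> nat) set" where
  "policy_edges Vmax Vmin \<sigma> \<tau> = {(i, \<sigma> i) | i. i \<in> Vmax} \<union> {(i, \<tau> i) | i. i \<in> Vmin}"

definition is_dcycle :: "(nat \<times> nat) set \<Rightarrow> (nat \<times> nat) set \<Rightarrow> bool" where
  "is_dcycle F C \<longleftrightarrow> (\<exists>vs. vs \<noteq> [] \<and> distinct vs \<and>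
      C = {(vs ! k, vs ! (Suc k mod length vs)) | k. k < length vs} \<and> C \<subseteq> F)"

definition Xi :: "nat set \<Rightarrow> nat set \<Rightarrow> (nat \<Rightarrow> nat) \<Rightarrow> (nat \<Rightarrow> nat) \<Rightarrow> bool" where
  "Xi Vmax Vmin \<sigma> \<tau> \<longleftrightarrow> (\<exists>!C. is_dcycle (policy_edges Vmax Vmin \<sigma> \<tau>) C)"

text \<open>g_i(sigma,tau): mean weight of the cycle the token enters from i.
After n steps the token is on the cycle; p is the cycle length.\<close>
definition mean_payoff ::
  "nat \<Rightarrow> nat set \<Rightarrow> (nat \<times> nat \<Rightarrow> real) \<Rightarrow> (nat \<Rightarrow> nat) \<Rightarrow> (nat \<Rightarrow> nat) \<Rightarrow> nat \<Rightarrow> real" where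
  "mean_payoff n Vmax r \<sigma> \<tau> i =
     (let f = succ_of Vmax \<sigma> \<tau>;
          j = (f ^^ n) i;
          p = (LEAST p. 0 < p \<and> (f ^^ p) j = j)
      in (\<Sum>k<p. r ((f ^^ k) j, (f ^^ Suc k) j)) / real p)"

definition optimal_pair ::
  "nat \<Rightarrow> (nat \<times> nat) set \<Rightarrow> nat set \<Rightarrow> nat set \<Rightarrow> (nat \<times> nat \<Rightarrow> real)
     \<Rightarrow> (nat \<Rightarrow> nat) \<Rightarrow> (nat \<Rightarrow> nat) \<Rightarrow> bool" where
  "optimal_pair n E Vmax Vmin r \<sigma> \<tau> \<longleftrightarrow>
     (\<exists>val :: nat \<Rightarrow> real. \<forall>i\<in>{0..<n}. \<forall>\<sigma>' \<tau>'.
        is_policy E Vmax \<sigma>' \<longrightarrow> is_policy E Vmin \<tau>' \<longrightarrow>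
          mean_payoff n Vmax r \<sigma>' \<tau> i \<le> val i \<and> val i \<le> mean_payoff n Vmax r \<sigma> \<tau>' i)"

end

theory Submission
  imports Defs
begin

lemma funpow_closed:
  assumes "\<forall>v<n. f v < n" "i < n" shows "(f^^k) i < n"
  using assms by (induction k) auto

lemma funpow_comp: "(f^^m) ((f^^k) x) = (f^^(m+k)) x"
  by (simp add: funpow_add)

lemma cycle_exists:
  assumes cl: "\<forall>v<n. f v < n" and i: "i < n"
  shows "\<exists>p. 0 < p \<and> p \<le> n \<and> (f^^p) ((f^^n) i) = (f^^n) i"
proof -
  let ?g = "\<lambda>k. (f^^k) i"
  have "\<not> inj_on ?g {..n}"
  proof
    assume inj: "inj_on ?g {..n}"
    have "?g ` {..n} \<subseteq> {..<n}" using funpow_closed[OF cl i] by auto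
    hence "card (?g ` {..n}) \<le> card {..<n::nat}" by (intro card_mono) auto
    with card_image[OF inj] show False by simp
  qed
  then obtain a b where ab: "a \<le> n" "b \<le> n" "a \<noteq> b" "?g a = ?g b"
    unfolding inj_on_def by auto
  then obtain a b where ab: "a \<le> n" "b \<le> n" "a < b" "?g a = ?g b"
    by (metis linorder_neqE_nat)
  define y where "y = (f^^a) i"
  have n: "(f^^n) i = (f^^(n-a)) y" using ab(1) unfolding y_def by (simp add: funpow_comp)
  have y: "(f^^(b-a)) y = y" unfolding y_def funpow_comp using ab(3,4) by simp
  have "(f^^(b-a)) ((f^^n) i) = (f^^(n-a)) ((f^^(b-a)) y)"
    unfolding n funpow_comp by (simp add: add.commute)
  also have "\<dots> = (f^^n) i" using y n by simp
  finally show ?thesis using ab by (intro exI[of _ "b-a"]) auto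
qed

definition cj :: "(nat \<Rightarrow> nat) \<Rightarrow> nat \<Rightarrow> nat \<Rightarrow> nat" where
  "cj f n i = (f^^n) i"
definition cp :: "(nat \<Rightarrow> nat) \<Rightarrow> nat \<Rightarrow> nat \<Rightarrow> nat" where
  "cp f n i = (LEAST p. 0 < p \<and> (f^^p) (cj f n i) = cj f n i)"
definition cyc :: "(nat \<Rightarrow> nat) \<Rightarrow> nat \<Rightarrow> nat \<Rightarrow> (nat \<times> nat) set" where
  "cyc f n i = (\<lambda>k. ((f^^k) (cj f n i), (f^^Suc k) (cj f n i))) ` {..<cp f n i}"

lemma cp_props:
  assumes "\<forall>v<n. f v < n" "i < n"
  shows "0 < cp f n i" "cp f n i \<le> n" "(f^^(cp f n i)) (cj f n i) = cj f n i"
proof -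
  obtain p where p: "0 < p" "p \<le> n" "(f^^p) (cj f n i) = cj f n i"
    using cycle_exists[OF assms] unfolding cj_def by blast
  have "0 < cp f n i \<and> (f^^(cp f n i)) (cj f n i) = cj f n i"
    unfolding cp_def by (rule LeastI[of _ p]) (use p in auto)
  thus "0 < cp f n i" "(f^^(cp f n i)) (cj f n i) = cj f n i" by auto
  have "cp f n i \<le> p" unfolding cp_def by (rule Least_le) (use p in auto)
  thus "cp f n i \<le> n" using p by simp
qed

lemma funpow_period:
  assumes "(f^^p) j = j" shows "(f^^(p*q + m)) j = (f^^m) j"
proof (induction q)
  case 0 then show ?case by simp
next
  case (Suc q)
  have "(f^^(p*Suc q + m)) j = (f^^(p*q+m)) ((f^^p) j)"
    by (simp add: funpow_comp algebra_simps)
  then show ?case using Suc assms by simp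
qed

lemma funpow_mod:
  assumes "(f^^p) j = j" shows "(f^^m) j = (f^^(m mod p)) j"
  using funpow_period[OF assms, of "m div p" "m mod p"] by simp

lemma cp_distinct:
  assumes cl: "\<forall>v<n. f v < n" and i: "i < n" and kk: "k < k'" "k' < cp f n i"
  shows "(f^^k) (cj f n i) \<noteq> (f^^k') (cj f n i)"
proof
  let ?j = "cj f n i" and ?p = "cp f n i"
  assume eq: "(f^^k) ?j = (f^^k') ?j"
  have per: "(f^^?p) ?j = ?j" using cp_props[OF cl i] by simp
  have "(f^^(?p-k)) ((f^^k) ?j) = (f^^(?p-k)) ((f^^k') ?j)" using eq by simp
  hence "(f^^?p) ?j = (f^^(?p + (k'-k))) ?j" using kk by (simp add: funpow_comp)
  also have "\<dots> = (f^^(k'-k)) ?j" using funpow_period[OF per, of 1 "k'-k"] by simp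
  finally have "(f^^(k'-k)) ?j = ?j" using per by simp
  moreover have "\<not> (0 < k'-k \<and> (f^^(k'-k)) ?j = ?j)"
    unfolding cp_def[symmetric] using not_less_Least[of "k'-k" "\<lambda>p. 0 < p \<and> (f^^p) ?j = ?j"]
      kk unfolding cp_def by auto
  ultimately show False using kk by simp
qed

lemma cyc_inj:
  assumes cl: "\<forall>v<n. f v < n" and i: "i < n"
  shows "inj_on (\<lambda>k. ((f^^k) (cj f n i), (f^^Suc k) (cj f n i))) {..<cp f n i}"
  unfolding inj_on_def
  by (metis cp_distinct[OF cl i] lessThan_iff linorder_neqE_nat prod.inject)

lemma cyc_card:
  assumes cl: "\<forall>v<n. f v < n" and i: "i < n"
  shows "card (cyc f n i) = cp f n i" "finite (cyc f n i)" "cyc f n i \<noteq> {}"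
  using card_image[OF cyc_inj[OF cl i]] cp_props[OF cl i] unfolding cyc_def by auto

lemma cyc_edges:
  assumes cl: "\<forall>v<n. f v < n" and i: "i < n" and e: "e \<in> cyc f n i"
  shows "\<exists>v<n. e = (v, f v)"
  using e funpow_closed[OF cl i] unfolding cyc_def cj_def by (auto simp: funpow_comp)

lemma cyc_dcycle:
  assumes cl: "\<forall>v<n. f v < n" and i: "i < n" and F: "cyc f n i \<subseteq> F"
  shows "is_dcycle F (cyc f n i)"
proof -
  let ?j = "cj f n i" and ?p = "cp f n i"
  define vs where "vs = map (\<lambda>k. (f^^k) ?j) [0..<?p]"
  have per: "(f^^?p) ?j = ?j" using cp_props[OF cl i] by simp
  have len: "length vs = ?p" unfolding vs_def by simp
  have nth: "\<And>k. k < ?p \<Longrightarrow> vs ! k = (f^^k) ?j" unfolding vs_def by simp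
  have "vs \<noteq> []" using cp_props[OF cl i] len by auto
  moreover have "distinct vs"
    unfolding distinct_conv_nth len
    by (metis nth cp_distinct[OF cl i] linorder_neqE_nat)
  moreover have "cyc f n i = {(vs ! k, vs ! (Suc k mod length vs)) | k. k < length vs}"
  proof -
    have "\<And>k. k < ?p \<Longrightarrow> vs ! (Suc k mod ?p) = (f^^Suc k) ?j"
      using nth cp_props(1)[OF cl i] funpow_mod[OF per, of "Suc k" for k] by simp
    hence "(\<lambda>k. ((f^^k) ?j, (f^^Suc k) ?j)) ` {..<?p} = (\<lambda>k. (vs!k, vs!(Suc k mod length vs))) ` {..<length vs}"
      using nth len by (intro image_cong) auto
    moreover have "{(vs ! k, vs ! (Suc k mod length vs)) | k. k < length vs} = (\<lambda>k. (vs!k, vs!(Suc k mod length vs))) ` {..<length vs}"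
      by auto
    ultimately show ?thesis unfolding cyc_def by simp
  qed
  ultimately show ?thesis unfolding is_dcycle_def using F by blast
qed

lemma mp_eq:
  assumes cl: "\<forall>v<n. succ_of Vmax \<sigma> \<tau> v < n" and i: "i < n"
  shows "mean_payoff n Vmax r \<sigma> \<tau> i =
    (\<Sum>e\<in>cyc (succ_of Vmax \<sigma> \<tau>) n i. r e) / real (card (cyc (succ_of Vmax \<sigma> \<tau>) n i))"
proof -
  let ?f = "succ_of Vmax \<sigma> \<tau>"
  have "(\<Sum>e\<in>cyc ?f n i. r e) = (\<Sum>k<cp ?f n i. r ((?f^^k) (cj ?f n i), (?f^^Suc k) (cj ?f n i)))"
    unfolding cyc_def by (subst sum.reindex[OF cyc_inj[OF cl i]]) simp
  thus ?thesis unfolding mean_payoff_def cyc_card(1)[OF cl i] Let_def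
    by (simp add: cp_def cj_def)
qed

lemma key:
  fixes C0 C' PE :: "(nat \<times> nat) set" and r rt w :: "nat \<times> nat \<Rightarrow> real"
  assumes fin: "finite C'" "finite C0" "C0 \<noteq> {}" "C' \<noteq> {}" "card C' \<le> N"
    and eps: "eps > 0" and c: "c = 2 * real N * eps"
    and close: "\<forall>e\<in>C' \<union> C0. \<bar>r e - rt e\<bar> \<le> eps"
    and sub: "C0 \<subseteq> PE" and uniq: "C' \<subseteq> PE \<Longrightarrow> C' = C0"
    and w: "\<And>e. w e = (if e \<in> PE then rt e else rt e + c)"
    and hyp: "sum w C' / card C' \<le> sum w C0 / card C0"
  shows "sum r C' / card C' \<le> sum r C0 / card C0"
proof (cases "C' \<subseteq> PE")
  case True then show ?thesis using uniq by simp
next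
  case False
  then obtain e0 where e0: "e0 \<in> C'" "e0 \<notin> PE" by auto
  define a where "a = real (card C')"
  define b where "b = real (card C0)"
  have a: "a > 0" "a \<le> N" using fin unfolding a_def by (auto simp: card_gt_0_iff)
  have b: "b > 0" using fin unfolding b_def by (auto simp: card_gt_0_iff)
  have c0: "c \<ge> 0" using c eps by simp
  have w0: "sum w C0 = sum rt C0" using sub w by (intro sum.cong) auto
  have "sum rt C' + c \<le> sum w C'"
  proof -
    have "sum w C' - sum rt C' = (\<Sum>e\<in>C'. w e - rt e)" by (simp add: sum_subtractf)
    also have "\<dots> \<ge> w e0 - rt e0"
      by (rule member_le_sum) (use e0 fin w c0 in auto)
    finally show ?thesis using e0 w by simp
  qed
  have s1: "sum r C' \<le> sum rt C' + a * eps"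
  proof -
    have "sum r C' \<le> (\<Sum>e\<in>C'. rt e + eps)" using close by (intro sum_mono) force
    thus ?thesis unfolding a_def by (simp add: sum.distrib)
  qed
  have s2: "sum rt C0 - b * eps \<le> sum r C0"
  proof -
    have "(\<Sum>e\<in>C0. rt e - eps) \<le> sum r C0" using close by (intro sum_mono) force
    thus ?thesis unfolding b_def by (simp add: sum_subtractf)
  qed
  have h: "(sum rt C' + c) / a \<le> sum rt C0 / b"
    using hyp w0 \<open>sum rt C' + c \<le> sum w C'\<close> a
    unfolding a_def b_def by (smt (verit) divide_right_mono of_nat_0_le_iff)
  have ca: "c / a \<ge> 2 * eps"
    using a c eps by (simp add: field_simps)
  have "sum r C' / a \<le> sum rt C' / a + eps" using s1 a by (simp add: field_simps)
  also have "\<dots> \<le> sum rt C0 / b - eps" using h ca a by (simp add: add_divide_distrib)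
  also have "\<dots> = (sum rt C0 - b * eps) / b" using b by (simp add: field_simps)
  also have "\<dots> \<le> sum r C0 / b" using s2 b by (intro divide_right_mono) auto
  finally show ?thesis unfolding a_def b_def .
qed


theorem mainTheorem18:
  fixes n :: nat and E :: "(nat \<times> nat) set" and Vmax Vmin :: "nat set"
    and r rt :: "nat \<times> nat \<Rightarrow> real" and \<epsilon> :: real
    and \<sigma> \<tau> :: "nat \<Rightarrow> nat"
  assumes "game_graph n E Vmax Vmin"
    and "\<epsilon> > 0"
    and "\<forall>e\<in>E. \<bar>r e - rt e\<bar> \<le> \<epsilon>"
    and "is_policy E Vmax \<sigma>" and "is_policy E Vmin \<tau>"
    and "Xi Vmax Vmin \<sigma> \<tau>"
    and "optimal_pair n E Vmax Vmin
           (\<lambda>e. if e \<in> policy_edges Vmax Vmin \<sigma> \<tau> then rt e else rt e - 2 * real n * \<epsilon>) \<sigma> \<tau>"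
    and "optimal_pair n E Vmax Vmin
           (\<lambda>e. if e \<in> policy_edges Vmax Vmin \<sigma> \<tau> then rt e else rt e + 2 * real n * \<epsilon>) \<sigma> \<tau>"
  shows "optimal_pair n E Vmax Vmin r \<sigma> \<tau>"
proof -
  note gg = assms(1)[unfolded game_graph_def]
  define PE where "PE = policy_edges Vmax Vmin \<sigma> \<tau>"
  define c where "c = 2 * real n * \<epsilon>"
  have cl: "\<forall>v<n. succ_of Vmax a b v < n" if "is_policy E Vmax a" "is_policy E Vmin b" for a b
  proof (intro allI impI)
    fix v assume v: "v < n"
    hence "v \<in> Vmax \<or> v \<in> Vmin" using gg by auto
    hence "(v, succ_of Vmax a b v) \<in> E" using that unfolding is_policy_def succ_of_def by auto
    thus "succ_of Vmax a b v < n" using gg by auto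
  qed
  have inE: "cyc (succ_of Vmax a b) n i \<subseteq> E"
    if q: "is_policy E Vmax a" "is_policy E Vmin b" "i < n" for a b i
  proof
    fix e assume "e \<in> cyc (succ_of Vmax a b) n i"
    then obtain v where v: "v < n" "e = (v, succ_of Vmax a b v)"
      using cyc_edges[OF cl[OF q(1,2)] q(3)] by blast
    hence "v \<in> Vmax \<or> v \<in> Vmin" using gg by auto
    thus "e \<in> E" using q v unfolding is_policy_def succ_of_def by auto
  qed
  have inPE: "cyc (succ_of Vmax \<sigma> \<tau>) n i \<subseteq> PE" if q: "i < n" for i
  proof
    fix e assume "e \<in> cyc (succ_of Vmax \<sigma> \<tau>) n i"
    then obtain v where v: "v < n" "e = (v, succ_of Vmax \<sigma> \<tau> v)"
      using cyc_edges[OF cl[OF assms(4,5)] q] by blast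
    hence "v \<in> Vmax \<or> v \<in> Vmin" using gg by auto
    thus "e \<in> PE" using v unfolding PE_def policy_edges_def succ_of_def by auto
  qed
  obtain C where C: "\<And>D. is_dcycle PE D \<Longrightarrow> D = C"
    using assms(6) unfolding Xi_def PE_def by auto
  have uniq: "cyc (succ_of Vmax a b) n i \<subseteq> PE \<Longrightarrow>
      cyc (succ_of Vmax a b) n i = cyc (succ_of Vmax \<sigma> \<tau>) n i"
    if q: "is_policy E Vmax a" "is_policy E Vmin b" "i < n" for a b i
    using C cyc_dcycle[OF cl[OF q(1,2)] q(3)] cyc_dcycle[OF cl[OF assms(4,5)] q(3) inPE[OF q(3)]]
    by metis
  have KEY: "sum rr (cyc (succ_of Vmax a b) n i) / card (cyc (succ_of Vmax a b) n i)
      \<le> sum rr (cyc (succ_of Vmax \<sigma> \<tau>) n i) / card (cyc (succ_of Vmax \<sigma> \<tau>) n i)"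
    if p: "is_policy E Vmax a" "is_policy E Vmin b" "i < n"
      and cl2: "\<forall>e\<in>E. \<bar>rr e - rrt e\<bar> \<le> \<epsilon>"
      and w: "\<And>e. w e = (if e \<in> PE then rrt e else rrt e + c)"
      and hyp: "sum w (cyc (succ_of Vmax a b) n i) / card (cyc (succ_of Vmax a b) n i)
      \<le> sum w (cyc (succ_of Vmax \<sigma> \<tau>) n i) / card (cyc (succ_of Vmax \<sigma> \<tau>) n i)"
    for a b i rr rrt w
  proof (rule key[where PE=PE and rt=rrt and w=w and N=n and eps=\<epsilon> and c=c])
    show "finite (cyc (succ_of Vmax a b) n i)" "cyc (succ_of Vmax a b) n i \<noteq> {}"
      using cyc_card[OF cl[OF p(1,2)] p(3)] by auto
    show "finite (cyc (succ_of Vmax \<sigma> \<tau>) n i)" "cyc (succ_of Vmax \<sigma> \<tau>) n i \<noteq> {}"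
      using cyc_card[OF cl[OF assms(4,5)] p(3)] by auto
    show "card (cyc (succ_of Vmax a b) n i) \<le> n"
      using cyc_card[OF cl[OF p(1,2)] p(3)] cp_props[OF cl[OF p(1,2)] p(3)] by simp
    show "\<epsilon> > 0" by fact
    show "c = 2 * real n * \<epsilon>" by (simp add: c_def)
    show "\<forall>e\<in>cyc (succ_of Vmax a b) n i \<union> cyc (succ_of Vmax \<sigma> \<tau>) n i. \<bar>rr e - rrt e\<bar> \<le> \<epsilon>"
      using inE[OF p] inE[OF assms(4,5) p(3)] cl2 by blast
    show "cyc (succ_of Vmax \<sigma> \<tau>) n i \<subseteq> PE" using inPE[OF p(3)] .
    show "cyc (succ_of Vmax a b) n i \<subseteq> PE \<Longrightarrow> cyc (succ_of Vmax a b) n i = cyc (succ_of Vmax \<sigma> \<tau>) n i"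
      using uniq[OF p] .
  qed (use w hyp in auto)
  show ?thesis unfolding optimal_pair_def
  proof (intro exI[of _ "\<lambda>i. mean_payoff n Vmax r \<sigma> \<tau> i"] ballI allI impI conjI)
    fix i \<sigma>' \<tau>' assume i: "i \<in> {0..<n}" and p1: "is_policy E Vmax \<sigma>'" and p2: "is_policy E Vmin \<tau>'"
    hence i': "i < n" by simp
    define w2 where "w2 = (\<lambda>e. if e \<in> PE then rt e else rt e + c)"
    obtain val where v: "\<And>i a b. i \<in> {0..<n} \<Longrightarrow> is_policy E Vmax a \<Longrightarrow> is_policy E Vmin b \<Longrightarrow>
       mean_payoff n Vmax w2 a \<tau> i \<le> val i \<and> val i \<le> mean_payoff n Vmax w2 \<sigma> b i"
      using assms(8) unfolding optimal_pair_def w2_def PE_def c_def by blast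
    have "mean_payoff n Vmax w2 \<sigma>' \<tau> i \<le> mean_payoff n Vmax w2 \<sigma> \<tau> i"
      using v[OF i p1 assms(5)] v[OF i assms(4) p2] by (meson order_trans v[OF i p1 assms(5)] order_refl)
    hence "mean_payoff n Vmax w2 \<sigma>' \<tau> i \<le> mean_payoff n Vmax w2 \<sigma> \<tau> i" .
    hence "mean_payoff n Vmax r \<sigma>' \<tau> i \<le> mean_payoff n Vmax r \<sigma> \<tau> i"
      unfolding mp_eq[OF cl[OF p1 assms(5)] i'] mp_eq[OF cl[OF assms(4,5)] i']
      by (intro KEY[OF p1 assms(5) i' assms(3), of w2]) (simp add: w2_def)
    thus "mean_payoff n Vmax r \<sigma>' \<tau> i \<le> mean_payoff n Vmax r \<sigma> \<tau> i" .
    define w1 where "w1 = (\<lambda>e. if e \<in> PE then - rt e else - rt e + c)"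
    define r1 where "r1 = (\<lambda>e. if e \<in> PE then rt e else rt e - c)"
    obtain val where v: "\<And>i a b. i \<in> {0..<n} \<Longrightarrow> is_policy E Vmax a \<Longrightarrow> is_policy E Vmin b \<Longrightarrow>
       mean_payoff n Vmax r1 a \<tau> i \<le> val i \<and> val i \<le> mean_payoff n Vmax r1 \<sigma> b i"
      using assms(7) unfolding optimal_pair_def r1_def PE_def c_def by blast
    have "mean_payoff n Vmax r1 \<sigma> \<tau> i \<le> mean_payoff n Vmax r1 \<sigma> \<tau>' i"
      using v[OF i assms(4) assms(5)] v[OF i assms(4) p2] by (meson order_trans)
    hence h1: "sum r1 (cyc (succ_of Vmax \<sigma> \<tau>) n i) / card (cyc (succ_of Vmax \<sigma> \<tau>) n i)
        \<le> sum r1 (cyc (succ_of Vmax \<sigma> \<tau>') n i) / card (cyc (succ_of Vmax \<sigma> \<tau>') n i)"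
      unfolding mp_eq[OF cl[OF assms(4) p2] i'] mp_eq[OF cl[OF assms(4,5)] i'] .
    have nr: "\<forall>e\<in>E. \<bar>- r e - - rt e\<bar> \<le> \<epsilon>" using assms(3) by (metis abs_minus_commute minus_diff_eq minus_minus diff_minus_eq_add add.commute)
    have w1e: "\<And>e. w1 e = (if e \<in> PE then - rt e else - rt e + c)" by (simp add: w1_def)
    have wr: "\<And>e. w1 e = - r1 e" unfolding w1_def r1_def by simp
    have sw: "\<And>C. sum w1 C = - sum r1 C" unfolding wr by (rule sum_negf)
    have "sum w1 (cyc (succ_of Vmax \<sigma> \<tau>') n i) / card (cyc (succ_of Vmax \<sigma> \<tau>') n i)
        \<le> sum w1 (cyc (succ_of Vmax \<sigma> \<tau>) n i) / card (cyc (succ_of Vmax \<sigma> \<tau>) n i)"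
      using h1 unfolding sw by simp
    hence "sum (\<lambda>e. - r e) (cyc (succ_of Vmax \<sigma> \<tau>') n i) / card (cyc (succ_of Vmax \<sigma> \<tau>') n i)
        \<le> sum (\<lambda>e. - r e) (cyc (succ_of Vmax \<sigma> \<tau>) n i) / card (cyc (succ_of Vmax \<sigma> \<tau>) n i)"
      by (rule KEY[OF assms(4) p2 i' nr w1e])
    hence "sum r (cyc (succ_of Vmax \<sigma> \<tau>) n i) / card (cyc (succ_of Vmax \<sigma> \<tau>) n i)
        \<le> sum r (cyc (succ_of Vmax \<sigma> \<tau>') n i) / card (cyc (succ_of Vmax \<sigma> \<tau>') n i)"
      by (simp add: sum_negf)
    thus "mean_payoff n Vmax r \<sigma> \<tau> i \<le> mean_payoff n Vmax r \<sigma> \<tau>' i"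
      unfolding mp_eq[OF cl[OF assms(4) p2] i'] mp_eq[OF cl[OF assms(4,5)] i'] .
  qed
qed

end
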